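(* Let $X=\{x_0,\ldots,x_m\}$ and $X'=\{x'_0,\ldots,x'_q\}$. The multiplicative dynamic feedback product $c\,\check{@}\,d:=c\,\tilde\circ\,\delta_{(d^{\sqcup\!\sqcup-1}\circ c)^{\circ-1}}$ is a right group action of the group $(\mathbb{R}^m_{pi}\langle\langle X'\rangle\rangle,\sqcup\!\sqcup,\mathbb 1)$ on the set $\mathbb{R}^q\langle\langle X\rangle\rangle$; that is, for all $c\in\mathbb{R}^q\langle\langle X\rangle\rangle$ and all purely improper $d_1,d_2\in\mathbb{R}^m\langle\langle X'\rangle\rangle$, $c\,\check{@}\,\mathbb 1=c$ and $(c\,\check{@}\,d_1)\,\check{@}\,d_2=c\,\check{@}\,(d_1\sqcup\!\sqcup d_2)$.
   Context: $\mathbb{R}^\ell\langle\langle X\rangle\rangle$: formal power series in noncommuting letters with coefficients in $\mathbb{R}^\ell$; componentwise products; $\mathbb{R}^m_{pi}\langle\langle X'\rangle\rangle$ is the set of purely improper series (every component has nonzero constant term); $\mathbb 1=[1\cdots1]^t$ viewed as a constant series. Shuffle product $\sqcup\!\sqcup$: bilinear, $(x_i\eta)\sqcup\!\sqcup(x_j\xi)=x_i(\eta\sqcup\!\sqcup x_j\xi)+x_j(x_i\eta\sqcup\!\sqcup\xi)$, $\eta\sqcup\!\sqcup\emptyset=\emptyset\sqcup\!\sqcup\eta=\eta$; $d^{\sqcup\!\sqcup-1}$ the componentwise shuffle inverse. Composition product: $c\circ e=\sum_{\eta\in X'^\ast}(c,\eta)\psi_e(\eta)(\mathbf 1)$ for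 $c\in\mathbb{R}^k\langle\langle X'\rangle\rangle$, $e\in\mathbb{R}^q\langle\langle X\rangle\rangle$, with $\mathbf 1=1\emptyset$, $\psi_e(x'_i)(w)=x_0(e_i\sqcup\!\sqcup w)$, $e_0:=\mathbf 1$, multiplicative (concatenation to composition). Multiplicative mixed composition: $c\,\tilde\circ\,\delta_g=\sum_{\eta\in X^\ast}(c,\eta)\bar\phi_g(\eta)(\mathbf 1)$ with $\bar\phi_g(x_0)(w)=x_0w$, $\bar\phi_g(x_i)(w)=x_i(g_i\sqcup\!\sqcup w)$ ($i\ge1$), multiplicative. For purely improper $g\in\mathbb{R}^m\langle\langle X\rangle\rangle$, $g^{\circ-1}$ is the unique $h\in\mathbb{R}^m\langle\langle X\rangle\rangle$ with $h=g^{\sqcup\!\sqcup-1}\,\tilde\circ\,\delta_h$. *)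

theory Defs
  imports "HOL-Analysis.Infinite_Sum"
begin

text \<open>A letter x_i of an alphabet X = {x_0,...,x_n} is the natural number i,
a word is a list of letters, a scalar series is a function from words to reals,
and an R^l-valued series is a function nat => ser whose components 1..l are meaningful.\<close>

type_synonym ser = "nat list \<Rightarrow> real"
type_synonym vser = "nat \<Rightarrow> ser"

definition ser1 :: ser where
  "ser1 = (\<lambda>w. if w = [] then 1 else 0)"

definition vone :: vser where
  "vone = (\<lambda>i. ser1)"

definition lcons :: "nat \<Rightarrow> ser \<Rightarrow> ser" where
  "lcons x a = (\<lambda>w. case w of [] \<Rightarrow> 0 | z # w' \<Rightarrow> (if z = x then a w' else 0))"

text \<open>Shuffle of two words, as the series of coefficients (u shuffle v, w),
 following the recursion (x_i u) sh (x_j v) = x_i (u sh x_j v) + x_j (x_i u sh v),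
 u sh empty = empty sh u = u.\<close>
fun wsh :: "nat list \<Rightarrow> nat list \<Rightarrow> ser" where
  "wsh [] v = (\<lambda>w. if w = v then 1 else 0)"
| "wsh (x # u) [] = (\<lambda>w. if w = x # u then 1 else 0)"
| "wsh (x # u) (y # v) =
     (\<lambda>w. lcons x (wsh u (y # v)) w + lcons y (wsh (x # u) v) w)"

definition shuf :: "ser \<Rightarrow> ser \<Rightarrow> ser" where
  "shuf a b = (\<lambda>w. \<Sum>\<^sub>\<infinity>(u, v)\<in>UNIV. a u * b v * wsh u v w)"

definition vshuf :: "vser \<Rightarrow> vser \<Rightarrow> vser" where
  "vshuf a b = (\<lambda>i. shuf (a i) (b i))"

definition shinv :: "ser \<Rightarrow> ser" where
  "shinv a = (THE b. shuf a b = ser1)"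

definition vshinv :: "vser \<Rightarrow> vser" where
  "vshinv a = (\<lambda>i. shinv (a i))"

definition pimp :: "nat \<Rightarrow> vser \<Rightarrow> bool" where
  "pimp l d \<longleftrightarrow> (\<forall>i\<in>{1..l}. d i [] \<noteq> 0)"

fun psi :: "vser \<Rightarrow> nat list \<Rightarrow> ser \<Rightarrow> ser" where
  "psi e [] w = w"
| "psi e (i # eta) w = lcons 0 (shuf (if i = 0 then ser1 else e i) (psi e eta w))"

text \<open>Composition product c o e, for c over X' = {x'_0..x'_q}, e in R^q<<X>>.\<close>
definition comp :: "nat \<Rightarrow> vser \<Rightarrow> vser \<Rightarrow> vser" where
  "comp q c e = (\<lambda>j w. \<Sum>\<^sub>\<infinity>eta\<in>{eta. set eta \<subseteq> {..q}}. c j eta * psi e eta ser1 w)"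

fun phibar :: "vser \<Rightarrow> nat list \<Rightarrow> ser \<Rightarrow> ser" where
  "phibar g [] w = w"
| "phibar g (i # eta) w =
     (if i = 0 then lcons 0 (phibar g eta w) else lcons i (shuf (g i) (phibar g eta w)))"

definition mixcomp :: "nat \<Rightarrow> vser \<Rightarrow> vser \<Rightarrow> vser" where
  "mixcomp m c g = (\<lambda>j w. \<Sum>\<^sub>\<infinity>eta\<in>{eta. set eta \<subseteq> {..m}}. c j eta * phibar g eta ser1 w)"

text \<open>Group inverse g^{o-1}: the unique h with h = g^{sh-1} mixcomp delta_h.\<close>
definition cinv :: "nat \<Rightarrow> vser \<Rightarrow> vser" where
  "cinv m g = (THE h. h = mixcomp m (vshinv g) h)"

definition fbp :: "nat \<Rightarrow> nat \<Rightarrow> vser \<Rightarrow> vser \<Rightarrow> vser" where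
  "fbp m q c d = mixcomp m c (cinv m (comp q (vshinv d) c))"

definition ser_eq :: "nat \<Rightarrow> nat \<Rightarrow> vser \<Rightarrow> vser \<Rightarrow> bool" where
  "ser_eq l n a b \<longleftrightarrow> (\<forall>j\<in>{1..l}. \<forall>w. set w \<subseteq> {..n} \<longrightarrow> a j w = b j w)"

end

theory Submission
  imports Defs
begin


lemma infsum_eq_sum:
  fixes f :: "'a \<Rightarrow> real"
  assumes "finite E" "E \<subseteq> A" "\<And>x. x \<in> A \<Longrightarrow> x \<notin> E \<Longrightarrow> f x = 0"
  shows "infsum f A = sum f E"
proof -
  have "infsum f A = infsum f E"
    by (rule infsum_cong_neutral) (use assms in auto)
  then show ?thesis using assms(1) by simp
qed

lemma summable_fin:
  fixes f :: "'a \<Rightarrow> real"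
  assumes "finite E" "\<And>x. x \<in> A \<Longrightarrow> x \<notin> E \<Longrightarrow> f x = 0"
  shows "f summable_on A"
proof -
  have "f summable_on A \<longleftrightarrow> f summable_on (A \<inter> E)"
    by (rule summable_on_cong_neutral) (use assms in auto)
  then show ?thesis using assms(1) by simp
qed

lemma wsh_Nil2: "wsh u [] w = (if w = u then 1 else 0)"
  by (cases u) auto

lemma wsh_Nil3: "wsh u v [] = (if u = [] \<and> v = [] then 1 else 0)"
  by (induction u v rule: wsh.induct) (auto simp: lcons_def)

lemma wsh_Cons3: "wsh u v (x # w) =
   (case u of [] \<Rightarrow> 0 | y # u' \<Rightarrow> if y = x then wsh u' v w else 0)
 + (case v of [] \<Rightarrow> 0 | z # v' \<Rightarrow> if z = x then wsh u v' w else 0)"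
  by (induction u v rule: wsh.induct) (auto simp: lcons_def wsh_Nil2 split: list.splits)

definition LL :: "nat \<Rightarrow> nat set \<Rightarrow> nat list set" where
  "LL n A = {xs. set xs \<subseteq> A \<and> length xs \<le> n}"

lemma finite_LL: "finite A \<Longrightarrow> finite (LL n A)"
  unfolding LL_def by (rule finite_lists_length_le)

lemma wsh_supp: "wsh u v w \<noteq> 0 \<Longrightarrow> u \<in> LL (length w) (set w) \<and> v \<in> LL (length w) (set w)"
proof (induction w arbitrary: u v)
  case Nil then show ?case by (auto simp: wsh_Nil3 LL_def split: if_splits)
next
  case (Cons x w)
  show ?case
  proof (cases "(case u of [] \<Rightarrow> 0 | y # u' \<Rightarrow> if y = x then wsh u' v w else 0) \<noteq> (0::real)")
    case True
    then obtain u' where u: "u = x # u'" "wsh u' v w \<noteq> 0" by (auto split: list.splits if_splits)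
    from Cons.IH[OF u(2)] show ?thesis using u by (auto simp: LL_def)
  next
    case False
    then have "(case v of [] \<Rightarrow> 0 | z # v' \<Rightarrow> if z = x then wsh u v' w else 0) \<noteq> (0::real)"
      using Cons.prems by (simp add: wsh_Cons3)
    then obtain v' where v: "v = x # v'" "wsh u v' w \<noteq> 0" by (auto split: list.splits if_splits)
    from Cons.IH[OF v(2)] show ?thesis using v by (auto simp: LL_def)
  qed
qed

lemma shuf_Nil[simp]: "shuf a b [] = a [] * b []"
proof -
  have "shuf a b [] = sum (\<lambda>(u, v). a u * b v * wsh u v []) {([], [])}"
    unfolding shuf_def by (rule infsum_eq_sum) (auto simp: wsh_Nil3 split: if_splits)
  then show ?thesis by (simp add: wsh_Nil3)
qed

definition dv :: "nat \<Rightarrow> ser \<Rightarrow> ser" where "dv x a = (\<lambda>w. a (x # w))"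

lemma dv_apply: "dv x a w = a (x # w)" by (simp add: dv_def)

lemma shuf_Cons: "shuf a b (x # w) = shuf (dv x a) b w + shuf a (dv x b) w"
proof -
  define S where "S = LL (Suc (length w)) (set (x # w)) \<times> LL (Suc (length w)) (set (x # w))"
  have finS: "finite S" unfolding S_def by (simp add: finite_LL)
  define F1 where "F1 = (\<lambda>(u, v). a u * b v * (case u of [] \<Rightarrow> 0 | y # u' \<Rightarrow> if y = x then wsh u' v w else 0))"
  define F2 where "F2 = (\<lambda>(u, v). a u * b v * (case v of [] \<Rightarrow> 0 | z # v' \<Rightarrow> if z = x then wsh u v' w else 0))"
  have e: "(\<lambda>(u, v). a u * b v * wsh u v (x # w)) = (\<lambda>p. F1 p + F2 p)"
    by (auto simp: F1_def F2_def wsh_Cons3 algebra_simps)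
  have s1: "F1 summable_on UNIV"
  proof (rule summable_fin[OF finS])
    fix p assume "p \<notin> S"
    then show "F1 p = 0" unfolding F1_def S_def
      by (cases p) (auto split: list.splits dest!: wsh_supp simp: LL_def dv_apply)
  qed
  have s2: "F2 summable_on UNIV"
  proof (rule summable_fin[OF finS])
    fix p assume "p \<notin> S"
    then show "F2 p = 0" unfolding F2_def S_def
      by (cases p) (auto split: list.splits dest!: wsh_supp simp: LL_def dv_apply)
  qed
  have i1: "infsum F1 UNIV = shuf (dv x a) b w"
  proof -
    have R: "\<And>u' v. (x # u', v) \<in> range (\<lambda>(u', v). (x # u', v))" by auto
    have "infsum F1 UNIV = infsum F1 ((\<lambda>(u', v). (x # u', v)) ` UNIV)"
      by (rule infsum_cong_neutral) (auto simp: F1_def R split: list.splits)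
    also have "\<dots> = infsum (F1 \<circ> (\<lambda>(u', v). (x # u', v))) UNIV"
      by (rule infsum_reindex) (auto simp: inj_on_def)
    also have "\<dots> = shuf (dv x a) b w" unfolding shuf_def
      by (rule infsum_cong) (auto simp: F1_def dv_apply)
    finally show ?thesis .
  qed
  have i2: "infsum F2 UNIV = shuf a (dv x b) w"
  proof -
    have R: "\<And>u v'. (u, x # v') \<in> range (\<lambda>(u, v'). (u, x # v'))" by auto
    have "infsum F2 UNIV = infsum F2 ((\<lambda>(u, v'). (u, x # v')) ` UNIV)"
      by (rule infsum_cong_neutral) (auto simp: F2_def R split: list.splits)
    also have "\<dots> = infsum (F2 \<circ> (\<lambda>(u, v'). (u, x # v'))) UNIV"
      by (rule infsum_reindex) (auto simp: inj_on_def)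
    also have "\<dots> = shuf a (dv x b) w" unfolding shuf_def
      by (rule infsum_cong) (auto simp: F2_def dv_apply)
    finally show ?thesis .
  qed
  have "shuf a b (x # w) = infsum (\<lambda>p. F1 p + F2 p) UNIV"
    unfolding shuf_def e[symmetric] by simp
  also have "\<dots> = infsum F1 UNIV + infsum F2 UNIV" by (rule infsum_add[OF s1 s2])
  finally show ?thesis using i1 i2 by simp
qed



lemma shuf_local:
  "(\<And>v. length v \<le> length w \<Longrightarrow> a v = a' v) \<Longrightarrow> (\<And>v. length v \<le> length w \<Longrightarrow> b v = b' v)
   \<Longrightarrow> shuf a b w = shuf a' b' w"
proof (induction w arbitrary: a b a' b')
  case Nil then show ?case by simp
next
  case (Cons x w)
  have 1: "shuf (dv x a) b w = shuf (dv x a') b' w"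
    by (rule Cons.IH) (use Cons.prems in \<open>auto simp: dv_apply\<close>)
  have 2: "shuf a (dv x b) w = shuf a' (dv x b') w"
    by (rule Cons.IH) (use Cons.prems in \<open>auto simp: dv_apply\<close>)
  show ?case using 1 2 by (simp add: shuf_Cons)
qed

lemma shuf_local_strict:
  "a [] = 0 \<Longrightarrow> (\<And>v. length v < length w \<Longrightarrow> b v = b' v) \<Longrightarrow> shuf a b w = shuf a b' w"
proof (induction w arbitrary: a b b')
  case Nil then show ?case by simp
next
  case (Cons x w)
  have 1: "shuf (dv x a) b w = shuf (dv x a) b' w"
    by (rule shuf_local) (use Cons.prems in \<open>auto simp: dv_apply\<close>)
  have 2: "shuf a (dv x b) w = shuf a (dv x b') w"
    by (rule Cons.IH) (use Cons.prems in \<open>auto simp: dv_apply\<close>)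
  show ?case using 1 2 by (simp add: shuf_Cons)
qed

lemma shuf_comm_pt: "shuf a b w = shuf b a w"
proof (induction w arbitrary: a b)
  case Nil then show ?case by simp
next
  case (Cons x w)
  show ?case unfolding shuf_Cons using Cons.IH[of "dv x a" b] Cons.IH[of a "dv x b"] by (simp add: add.commute)
qed

lemma shuf_comm: "shuf a b = shuf b a"
  using shuf_comm_pt by blast

lemma shuf_zero_right[simp]: "shuf a (\<lambda>_. 0) = (\<lambda>_. 0)"
proof -
  have "shuf a (\<lambda>_. 0) w = 0" for w
    by (induction w arbitrary: a) (auto simp: shuf_Cons dv_def)
  then show ?thesis by auto
qed

lemma shuf_zero_left[simp]: "shuf (\<lambda>_. 0) a = (\<lambda>_. 0)"
  by (subst shuf_comm) simp

lemma shuf_add_right: "shuf a (\<lambda>v. b v + c v) = (\<lambda>w. shuf a b w + shuf a c w)"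
proof -
  have "shuf a (\<lambda>v. b v + c v) w = shuf a b w + shuf a c w" for w
  proof (induction w arbitrary: a b c)
    case Nil then show ?case by (simp add: algebra_simps)
  next
    case (Cons x w)
    have e: "dv x (\<lambda>v. b v + c v) = (\<lambda>v. dv x b v + dv x c v)" by (auto simp: dv_apply)
    show ?case by (simp add: shuf_Cons e Cons.IH)
  qed
  then show ?thesis by auto
qed

lemma shuf_add_left: "shuf (\<lambda>v. b v + c v) a = (\<lambda>w. shuf b a w + shuf c a w)"
  by (subst shuf_comm) (simp add: shuf_add_right shuf_comm_pt[of a])

lemma shuf_scale_right: "shuf a (\<lambda>v. r * b v) = (\<lambda>w. r * shuf a b w)"
proof -
  have "shuf a (\<lambda>v. r * b v) w = r * shuf a b w" for w
  proof (induction w arbitrary: a b)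
    case Nil then show ?case by (simp add: algebra_simps)
  next
    case (Cons x w)
    have e: "dv x (\<lambda>v. r * b v) = (\<lambda>v. r * dv x b v)" by (auto simp: dv_apply)
    show ?case by (simp add: shuf_Cons e Cons.IH algebra_simps)
  qed
  then show ?thesis by auto
qed

lemma shuf_scale_left: "shuf (\<lambda>v. r * b v) a = (\<lambda>w. r * shuf b a w)"
  by (subst shuf_comm) (simp add: shuf_scale_right shuf_comm_pt[of a])

lemma shuf_sum_right: "finite A \<Longrightarrow> shuf a (\<lambda>v. \<Sum>i\<in>A. f i v) = (\<lambda>w. \<Sum>i\<in>A. shuf a (f i) w)"
proof (induction A rule: finite_induct)
  case empty then show ?case by simp
next
  case (insert x F)
  then show ?case by (simp add: shuf_add_right)
qed

lemma shuf_sum_left: "finite A \<Longrightarrow> shuf (\<lambda>v. \<Sum>i\<in>A. f i v) a = (\<lambda>w. \<Sum>i\<in>A. shuf (f i) a w)"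
  by (subst shuf_comm) (simp add: shuf_sum_right shuf_comm_pt[of a])

lemma dv_ser1[simp]: "dv x ser1 = (\<lambda>_. 0)"
  by (auto simp: ser1_def dv_def)

lemma ser1_Nil[simp]: "ser1 [] = 1" and ser1_Cons[simp]: "ser1 (x # w) = 0"
  by (auto simp: ser1_def dv_def)

lemma shuf_unit_left[simp]: "shuf ser1 b = b"
proof -
  have "shuf ser1 b w = b w" for w
    by (induction w arbitrary: b) (auto simp: shuf_Cons dv_apply)
  then show ?thesis by auto
qed

lemma shuf_unit_right[simp]: "shuf b ser1 = b"
  by (subst shuf_comm) simp

lemma dv_shuf: "dv x (shuf a b) = (\<lambda>w. shuf (dv x a) b w + shuf a (dv x b) w)"
  by (rule ext) (simp add: dv_apply shuf_Cons)

lemma shuf_assoc: "shuf (shuf a b) c = shuf a (shuf b c)"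
proof -
  have "shuf (shuf a b) c w = shuf a (shuf b c) w" for w
  proof (induction w arbitrary: a b c)
    case Nil then show ?case by simp
  next
    case (Cons x w)
    show ?case
      by (simp add: shuf_Cons dv_shuf shuf_add_left shuf_add_right Cons.IH)
  qed
  then show ?thesis by auto
qed

lemma shuf_left_commute: "shuf a (shuf b c) = shuf b (shuf a c)"
  by (metis shuf_assoc shuf_comm)

lemmas shuf_ac = shuf_assoc shuf_comm shuf_left_commute

lemma shuf_nz: "shuf a b w \<noteq> 0 \<Longrightarrow> \<exists>v. length v \<le> length w \<and> b v \<noteq> 0"
proof (rule ccontr)
  assume "shuf a b w \<noteq> 0" "\<not> (\<exists>v. length v \<le> length w \<and> b v \<noteq> 0)"
  then have "shuf a b w = shuf a (\<lambda>_. 0) w" by (intro shuf_local) auto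
  then show False using \<open>shuf a b w \<noteq> 0\<close> by simp
qed

lemma shuf_inv_unique: "shuf a b = ser1 \<Longrightarrow> shuf a b' = ser1 \<Longrightarrow> b = b'"
  by (metis shuf_assoc shuf_comm shuf_unit_left shuf_unit_right)



definition ext :: "vser \<Rightarrow> nat \<Rightarrow> ser" where
  "ext h i = (if i = 0 then ser1 else h i)"

lemma ext_0[simp]: "ext h 0 = ser1" and ext_nz[simp]: "i \<noteq> 0 \<Longrightarrow> ext h i = h i"
  by (auto simp: ext_def)

definition MX :: "nat \<Rightarrow> vser \<Rightarrow> ser \<Rightarrow> ser" where
  "MX m h a = (\<lambda>w. infsum (\<lambda>eta. a eta * phibar h eta ser1 w) {eta. set eta \<subseteq> {..m}})"

definition CP :: "nat \<Rightarrow> vser \<Rightarrow> ser \<Rightarrow> ser" where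
  "CP q e a = (\<lambda>w. infsum (\<lambda>eta. a eta * psi e eta ser1 w) {eta. set eta \<subseteq> {..q}})"

lemma mixcomp_MX: "mixcomp m c h = (\<lambda>j. MX m h (c j))"
  by (simp add: mixcomp_def MX_def)

lemma comp_CP: "comp q c e = (\<lambda>j. CP q e (c j))"
  by (simp add: comp_def CP_def)

lemma shuf_zero_local: "(\<And>v. length v \<le> length w \<Longrightarrow> s v = 0) \<Longrightarrow> shuf p s w = 0"
proof -
  assume "\<And>v. length v \<le> length w \<Longrightarrow> s v = 0"
  then have "shuf p s w = shuf p (\<lambda>_. 0) w" by (intro shuf_local) auto
  then show ?thesis by simp
qed

lemma shuf_infsum:
  assumes "finite E" "E \<subseteq> A"
    "\<And>eta v. eta \<in> A \<Longrightarrow> eta \<notin> E \<Longrightarrow> length v \<le> length w \<Longrightarrow> f eta v = 0"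
  shows "shuf p (\<lambda>v. infsum (\<lambda>eta. c eta * f eta v) A) w = (\<Sum>eta\<in>E. c eta * shuf p (f eta) w)"
proof -
  have "shuf p (\<lambda>v. infsum (\<lambda>eta. c eta * f eta v) A) w = shuf p (\<lambda>v. \<Sum>eta\<in>E. c eta * f eta v) w"
  proof (rule shuf_local)
    fix v :: "nat list" assume "length v \<le> length w"
    then show "infsum (\<lambda>eta. c eta * f eta v) A = (\<Sum>eta\<in>E. c eta * f eta v)"
      by (intro infsum_eq_sum) (use assms in auto)
  qed simp
  also have "\<dots> = (\<Sum>eta\<in>E. c eta * shuf p (f eta) w)"
    by (simp add: shuf_sum_right[OF assms(1)] shuf_scale_right)
  finally show ?thesis .
qed

lemma phibar_Nil_word: "phibar h eta ser1 [] = (if eta = [] then 1 else 0)"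
  by (cases eta) (auto simp: lcons_def)

lemma phibar_Nil: "phibar h [] ser1 w = ser1 w" by simp

lemma phibar_Cons_Cons:
  "phibar h (k # eta) ser1 (i # w) = (if k = i then shuf (ext h i) (phibar h eta ser1) w else 0)"
  by (auto simp: lcons_def)

lemma phibar_len: "phibar h eta ser1 w \<noteq> 0 \<Longrightarrow> length eta \<le> length w"
proof (induction eta arbitrary: w)
  case Nil then show ?case by simp
next
  case (Cons k eta)
  show ?case
  proof (cases w)
    case Nil then show ?thesis using Cons.prems by (simp add: lcons_def split: if_splits)
  next
    case (Cons i w')
    with Cons.prems have "shuf (ext h i) (phibar h eta ser1) w' \<noteq> 0"
      by (simp del: phibar.simps(2) add: phibar_Cons_Cons split: if_splits)
    then obtain v where "length v \<le> length w'" "phibar h eta ser1 v \<noteq> 0"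
      using shuf_nz by blast
    then show ?thesis using Cons.IH Cons by fastforce
  qed
qed

lemma MX_Nil[simp]: "MX m h a [] = a []"
proof -
  have "MX m h a [] = (\<Sum>eta\<in>{[]}. a eta * phibar h eta ser1 [])"
    unfolding MX_def by (rule infsum_eq_sum) (auto simp: phibar_Nil_word)
  then show ?thesis by simp
qed

lemma MX_out: "m < i \<Longrightarrow> MX m h a (i # w) = 0"
  unfolding MX_def
proof (rule infsum_0)
  fix eta assume "m < i" "eta \<in> {eta. set eta \<subseteq> {..m}}"
  then show "a eta * phibar h eta ser1 (i # w) = 0"
    by (cases eta) (auto simp del: phibar.simps(2) simp: phibar_Cons_Cons)
qed

lemma MX_Cons: "i \<le> m \<Longrightarrow> MX m h a (i # w) = shuf (ext h i) (MX m h (dv i a)) w"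
proof -
  assume im: "i \<le> m"
  define A where "A = {eta :: nat list. set eta \<subseteq> {..m}}"
  define E where "E = LL (length w) {..m}"
  have finE: "finite E" unfolding E_def by (simp add: finite_LL)
  have EA: "E \<subseteq> A" unfolding E_def A_def LL_def by auto
  have out: "phibar h eta ser1 v = 0" if "eta \<in> A" "eta \<notin> E" "length v \<le> length w" for eta v
    using that phibar_len[of h eta v] unfolding A_def E_def LL_def by force
  have "MX m h a (i # w) = infsum (\<lambda>eta. a eta * phibar h eta ser1 (i # w)) A"
    by (simp add: MX_def A_def)
  also have "\<dots> = infsum (\<lambda>eta. a eta * phibar h eta ser1 (i # w)) (Cons i ` A)"
  proof (rule infsum_cong_neutral)
    fix x assume "x \<in> A - Cons i ` A"
    then show "a x * phibar h x ser1 (i # w) = 0"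
      by (cases x) (auto simp del: phibar.simps(2) simp: phibar_Cons_Cons A_def image_iff)
  qed (use im in \<open>auto simp: A_def\<close>)
  also have "\<dots> = infsum ((\<lambda>eta. a eta * phibar h eta ser1 (i # w)) \<circ> Cons i) A"
    by (rule infsum_reindex) auto
  also have "\<dots> = infsum (\<lambda>eta. a (i # eta) * shuf (ext h i) (phibar h eta ser1) w) A"
    by (rule infsum_cong) (simp del: phibar.simps(2) add: phibar_Cons_Cons)
  also have "\<dots> = (\<Sum>eta\<in>E. a (i # eta) * shuf (ext h i) (phibar h eta ser1) w)"
  proof (rule infsum_eq_sum[OF finE EA])
    fix eta assume "eta \<in> A" "eta \<notin> E"
    then have "shuf (ext h i) (phibar h eta ser1) w = 0"
      by (intro shuf_zero_local) (simp add: out)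
    then show "a (i # eta) * shuf (ext h i) (phibar h eta ser1) w = 0" by simp
  qed
  also have "\<dots> = shuf (ext h i) (MX m h (dv i a)) w"
    unfolding MX_def A_def[symmetric]
    by (subst shuf_infsum[OF finE EA]) (auto simp: out dv_apply)
  finally show ?thesis .
qed

lemma dv_MX: "i \<le> m \<Longrightarrow> dv i (MX m h a) = shuf (ext h i) (MX m h (dv i a))"
  by (rule ext) (simp add: dv_apply MX_Cons)

lemma dv_MX_out: "m < i \<Longrightarrow> dv i (MX m h a) = (\<lambda>_. 0)"
  by (rule ext) (simp add: dv_apply MX_out)

lemma psi_Nil_word: "psi e eta ser1 [] = (if eta = [] then 1 else 0)"
  by (cases eta) (auto simp: lcons_def)

lemma psi_Cons_Cons:
  "psi e (k # eta) ser1 (j # w) = (if j = 0 then shuf (ext e k) (psi e eta ser1) w else 0)"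
  by (auto simp: lcons_def ext_def)

lemma psi_len: "psi e eta ser1 w \<noteq> 0 \<Longrightarrow> length eta \<le> length w"
proof (induction eta arbitrary: w)
  case Nil then show ?case by simp
next
  case (Cons k eta)
  show ?case
  proof (cases w)
    case Nil then show ?thesis using Cons.prems by (simp add: lcons_def split: if_splits)
  next
    case (Cons i w')
    with Cons.prems have "shuf (ext e k) (psi e eta ser1) w' \<noteq> 0"
      by (simp del: psi.simps(2) add: psi_Cons_Cons split: if_splits)
    then obtain v where "length v \<le> length w'" "psi e eta ser1 v \<noteq> 0"
      using shuf_nz by blast
    then show ?thesis using Cons.IH Cons by fastforce
  qed
qed

lemma CP_Nil[simp]: "CP q e a [] = a []"
proof -
  have "CP q e a [] = (\<Sum>eta\<in>{[]}. a eta * psi e eta ser1 [])"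
    unfolding CP_def by (rule infsum_eq_sum) (auto simp: psi_Nil_word)
  then show ?thesis by simp
qed

lemma CP_nz: "k \<noteq> 0 \<Longrightarrow> CP q e a (k # w) = 0"
  unfolding CP_def
proof (rule infsum_0)
  fix eta assume "k \<noteq> 0"
  then show "a eta * psi e eta ser1 (k # w) = 0"
    by (cases eta) (auto simp del: psi.simps(2) simp: psi_Cons_Cons)
qed

lemma CP_0: "CP q e a (0 # w) = (\<Sum>i\<le>q. shuf (ext e i) (CP q e (dv i a)) w)"
proof -
  define A where "A = {eta :: nat list. set eta \<subseteq> {..q}}"
  define E where "E = LL (length w) {..q}"
  define E' where "E' = LL (Suc (length w)) {..q}"
  have finE: "finite E" unfolding E_def by (simp add: finite_LL)
  have finE': "finite E'" unfolding E'_def by (simp add: finite_LL)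
  have EA: "E \<subseteq> A" unfolding E_def A_def LL_def by auto
  have out: "psi e eta ser1 v = 0" if "eta \<in> A" "eta \<notin> E" "length v \<le> length w" for eta v
    using that psi_len[of e eta v] unfolding A_def E_def LL_def by force
  have img: "E' - {[]} = (\<lambda>(i, eta). i # eta) ` ({..q} \<times> E)"
  proof
    show "E' - {[]} \<subseteq> (\<lambda>(i, eta). i # eta) ` ({..q} \<times> E)"
    proof
      fix x assume x: "x \<in> E' - {[]}"
      then obtain i eta where "x = i # eta" by (cases x) auto
      with x show "x \<in> (\<lambda>(i, eta). i # eta) ` ({..q} \<times> E)"
        by (auto simp: E'_def E_def LL_def image_iff)
    qed
  qed (auto simp: E'_def E_def LL_def)
  have "CP q e a (0 # w) = (\<Sum>eta\<in>E'. a eta * psi e eta ser1 (0 # w))"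
    unfolding CP_def
  proof (rule infsum_eq_sum[OF finE'])
    fix eta assume "eta \<in> {eta. set eta \<subseteq> {..q}}" "eta \<notin> E'"
    then show "a eta * psi e eta ser1 (0 # w) = 0"
      using psi_len[of e eta "0 # w"] by (auto simp: E'_def LL_def)
  qed (auto simp: E'_def LL_def)
  also have "\<dots> = (\<Sum>eta\<in>E' - {[]}. a eta * psi e eta ser1 (0 # w))"
    by (rule sum.mono_neutral_right) (auto simp: finE' psi_Nil_word)
  also have "\<dots> = (\<Sum>p\<in>{..q} \<times> E. (\<lambda>(i, eta). a (i # eta) * shuf (ext e i) (psi e eta ser1) w) p)"
    unfolding img
    by (subst sum.reindex) (auto simp del: psi.simps(2) simp: inj_on_def psi_Cons_Cons intro!: sum.cong)
  also have "\<dots> = (\<Sum>i\<le>q. \<Sum>eta\<in>E. a (i # eta) * shuf (ext e i) (psi e eta ser1) w)"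
    by (subst sum.cartesian_product[symmetric]) simp
  also have "\<dots> = (\<Sum>i\<le>q. shuf (ext e i) (CP q e (dv i a)) w)"
  proof (rule sum.cong[OF refl])
    fix i assume "i \<in> {..q}"
    show "(\<Sum>eta\<in>E. a (i # eta) * shuf (ext e i) (psi e eta ser1) w) = shuf (ext e i) (CP q e (dv i a)) w"
      unfolding CP_def A_def[symmetric]
      by (subst shuf_infsum[OF finE EA]) (auto simp: out dv_apply)
  qed
  finally show ?thesis .
qed

lemma dv_CP_0: "dv 0 (CP q e a) = (\<lambda>w. \<Sum>i\<le>q. shuf (ext e i) (CP q e (dv i a)) w)"
  by (rule ext) (simp add: dv_apply CP_0)

lemma dv_CP_nz: "k \<noteq> 0 \<Longrightarrow> dv k (CP q e a) = (\<lambda>_. 0)"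
  by (rule ext) (simp add: dv_apply CP_nz)



lemma dv_add[simp]: "dv x (\<lambda>v. a v + b v) = (\<lambda>v. dv x a v + dv x b v)"
  by (auto simp: dv_def)
lemma dv_zero[simp]: "dv x (\<lambda>_. 0) = (\<lambda>_. 0)"
  by (auto simp: dv_def)
lemma dv_sum: "dv x (\<lambda>v. \<Sum>i\<in>A. f i v) = (\<lambda>v. \<Sum>i\<in>A. dv x (f i) v)"
  by (auto simp: dv_def)

lemma shuf_local2: "(\<And>v. length v \<le> length w \<Longrightarrow> b v = b' v) \<Longrightarrow> shuf a b w = shuf a b' w"
  by (rule shuf_local) auto

lemma MX_zero[simp]: "MX m h (\<lambda>_. 0) = (\<lambda>_. 0)"
  by (simp add: MX_def)

lemma CP_zero[simp]: "CP q e (\<lambda>_. 0) = (\<lambda>_. 0)"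
  by (simp add: CP_def)

lemma MX_add_pt: "MX m h (\<lambda>v. a v + b v) w = MX m h a w + MX m h b w"
proof (induction "length w" arbitrary: w a b rule: less_induct)
  case less
  show ?case
  proof (cases w)
    case Nil then show ?thesis by simp
  next
    case (Cons i w')
    show ?thesis
    proof (cases "i \<le> m")
      case True
      have "MX m h (\<lambda>v. a v + b v) w = shuf (ext h i) (MX m h (\<lambda>v. dv i a v + dv i b v)) w'"
        using True Cons by (simp add: MX_Cons)
      also have "\<dots> = shuf (ext h i) (\<lambda>v. MX m h (dv i a) v + MX m h (dv i b) v) w'"
        by (rule shuf_local2) (use less Cons in auto)
      also have "\<dots> = MX m h a w + MX m h b w"
        using True Cons by (simp add: shuf_add_right MX_Cons)
      finally show ?thesis .
    next
      case False then show ?thesis by (simp add: MX_out Cons)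
    qed
  qed
qed

lemma MX_add: "MX m h (\<lambda>v. a v + b v) = (\<lambda>w. MX m h a w + MX m h b w)"
  using MX_add_pt by blast

lemma MX_sum: "finite A \<Longrightarrow> MX m h (\<lambda>v. \<Sum>i\<in>A. f i v) = (\<lambda>w. \<Sum>i\<in>A. MX m h (f i) w)"
  by (induction A rule: finite_induct) (simp_all add: MX_add)

lemma MX_ser1[simp]: "MX m h ser1 = ser1"
proof
  fix w show "MX m h ser1 w = ser1 w"
  proof (cases w)
    case Nil then show ?thesis by simp
  next
    case (Cons i w')
    then show ?thesis by (cases "i \<le> m") (simp_all add: MX_Cons MX_out)
  qed
qed

lemma MX_shuf_pt: "MX m h (shuf a b) w = shuf (MX m h a) (MX m h b) w"
proof (induction "length w" arbitrary: w a b rule: less_induct)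
  case less
  show ?case
  proof (cases w)
    case Nil then show ?thesis by simp
  next
    case (Cons i w')
    show ?thesis
    proof (cases "i \<le> m")
      case True
      let ?E = "ext h i"
      have "MX m h (shuf a b) w = shuf ?E (MX m h (\<lambda>v. shuf (dv i a) b v + shuf a (dv i b) v)) w'"
        using True Cons by (simp add: MX_Cons dv_shuf)
      also have "\<dots> = shuf ?E (\<lambda>v. MX m h (shuf (dv i a) b) v + MX m h (shuf a (dv i b)) v) w'"
        by (simp add: MX_add)
      also have "\<dots> = shuf ?E (\<lambda>v. shuf (MX m h (dv i a)) (MX m h b) v + shuf (MX m h a) (MX m h (dv i b)) v) w'"
        by (rule shuf_local2) (use less Cons in auto)
      also have "\<dots> = shuf (MX m h a) (MX m h b) w"
        using True Cons by (simp add: shuf_add_right shuf_Cons dv_MX shuf_ac)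
      finally show ?thesis .
    next
      case False then show ?thesis
        by (simp add: MX_out Cons shuf_Cons dv_MX_out)
    qed
  qed
qed

lemma MX_shuf: "MX m h (shuf a b) = shuf (MX m h a) (MX m h b)"
  using MX_shuf_pt by blast

lemma MX_local_h:
  "(\<And>i v. i \<in> {1..m} \<Longrightarrow> length v < length w \<Longrightarrow> h i v = h' i v) \<Longrightarrow> MX m h a w = MX m h' a w"
proof (induction "length w" arbitrary: w a rule: less_induct)
  case less
  show ?case
  proof (cases w)
    case Nil then show ?thesis by simp
  next
    case (Cons i w')
    show ?thesis
    proof (cases "i \<le> m")
      case True
      have "shuf (ext h i) (MX m h (dv i a)) w' = shuf (ext h' i) (MX m h' (dv i a)) w'"
      proof (rule shuf_local)
        fix v :: "nat list" assume v: "length v \<le> length w'"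
        show "ext h i v = ext h' i v"
          using less.prems[of i v] True v Cons by (cases "i = 0") auto
        show "MX m h (dv i a) v = MX m h' (dv i a) v"
          by (rule less.hyps) (use v Cons less.prems in auto)
      qed
      then show ?thesis using True Cons by (simp add: MX_Cons)
    next
      case False then show ?thesis by (simp add: MX_out Cons)
    qed
  qed
qed

lemma MX_id: "set w \<subseteq> {..m} \<Longrightarrow> MX m (\<lambda>_. ser1) a w = a w"
proof (induction w arbitrary: a)
  case Nil then show ?case by simp
next
  case (Cons i w)
  then have "MX m (\<lambda>_. ser1) (dv i a) w = dv i a w" by auto
  then show ?case using Cons.prems by (simp add: MX_Cons ext_def dv_apply)
qed

lemma MX_comp_pt: "MX m b (MX m a c) w = MX m (\<lambda>i. shuf (MX m b (a i)) (b i)) c w"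
proof (induction "length w" arbitrary: w c rule: less_induct)
  case less
  let ?s = "\<lambda>i. shuf (MX m b (a i)) (b i)"
  show ?case
  proof (cases w)
    case Nil then show ?thesis by simp
  next
    case (Cons i w')
    show ?thesis
    proof (cases "i \<le> m")
      case True
      have "MX m b (MX m a c) w = shuf (ext b i) (shuf (MX m b (ext a i)) (MX m b (MX m a (dv i c)))) w'"
        using True Cons by (simp add: MX_Cons dv_MX MX_shuf)
      also have "\<dots> = shuf (shuf (ext b i) (MX m b (ext a i))) (MX m b (MX m a (dv i c))) w'"
        by (simp add: shuf_assoc)
      also have "\<dots> = shuf (shuf (ext b i) (MX m b (ext a i))) (MX m ?s (dv i c)) w'"
        by (rule shuf_local2) (use less Cons in auto)
      also have "\<dots> = shuf (ext ?s i) (MX m ?s (dv i c)) w'"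
        by (cases "i = 0") (simp_all add: shuf_comm)
      also have "\<dots> = MX m ?s c w" using True Cons by (simp add: MX_Cons)
      finally show ?thesis .
    next
      case False then show ?thesis by (simp add: MX_out Cons)
    qed
  qed
qed

lemma MX_comp: "MX m b (MX m a c) = MX m (\<lambda>i. shuf (MX m b (a i)) (b i)) c"
  using MX_comp_pt by blast

lemma CP_add_pt: "CP q e (\<lambda>v. a v + b v) w = CP q e a w + CP q e b w"
proof (induction "length w" arbitrary: w a b rule: less_induct)
  case less
  show ?case
  proof (cases w)
    case Nil then show ?thesis by simp
  next
    case (Cons k w')
    show ?thesis
    proof (cases "k = 0")
      case True
      have "CP q e (\<lambda>v. a v + b v) w = (\<Sum>i\<le>q. shuf (ext e i) (CP q e (\<lambda>v. dv i a v + dv i b v)) w')"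
        using True Cons by (simp add: CP_0)
      also have "\<dots> = (\<Sum>i\<le>q. shuf (ext e i) (\<lambda>v. CP q e (dv i a) v + CP q e (dv i b) v) w')"
        by (rule sum.cong[OF refl], rule shuf_local2) (use less Cons in auto)
      also have "\<dots> = CP q e a w + CP q e b w"
        using True Cons by (simp add: shuf_add_right CP_0 sum.distrib)
      finally show ?thesis .
    next
      case False then show ?thesis by (simp add: CP_nz Cons)
    qed
  qed
qed

lemma CP_add: "CP q e (\<lambda>v. a v + b v) = (\<lambda>w. CP q e a w + CP q e b w)"
  using CP_add_pt by blast

lemma CP_ser1[simp]: "CP q e ser1 = ser1"
proof
  fix w show "CP q e ser1 w = ser1 w"
  proof (cases w)
    case Nil then show ?thesis by simp
  next
    case (Cons i w')
    then show ?thesis by (cases "i = 0") (simp_all add: CP_0 CP_nz)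
  qed
qed

lemma CP_shuf_pt: "CP q e (shuf a b) w = shuf (CP q e a) (CP q e b) w"
proof (induction "length w" arbitrary: w a b rule: less_induct)
  case less
  show ?case
  proof (cases w)
    case Nil then show ?thesis by simp
  next
    case (Cons k w')
    show ?thesis
    proof (cases "k = 0")
      case True
      have "CP q e (shuf a b) w = (\<Sum>i\<le>q. shuf (ext e i) (CP q e (\<lambda>v. shuf (dv i a) b v + shuf a (dv i b) v)) w')"
        using True Cons by (simp add: CP_0 dv_shuf)
      also have "\<dots> = (\<Sum>i\<le>q. shuf (ext e i) (\<lambda>v. CP q e (shuf (dv i a) b) v + CP q e (shuf a (dv i b)) v) w')"
        by (simp add: CP_add)
      also have "\<dots> = (\<Sum>i\<le>q. shuf (ext e i) (\<lambda>v. shuf (CP q e (dv i a)) (CP q e b) v + shuf (CP q e a) (CP q e (dv i b)) v) w')"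
        by (rule sum.cong[OF refl], rule shuf_local2) (use less Cons in auto)
      also have "\<dots> = shuf (CP q e a) (CP q e b) w"
        using True Cons by (simp add: shuf_add_right shuf_Cons dv_CP_0 shuf_sum_left shuf_sum_right sum.distrib shuf_ac)
      finally show ?thesis .
    next
      case False then show ?thesis
        by (simp add: CP_nz Cons shuf_Cons dv_CP_nz)
    qed
  qed
qed

lemma CP_shuf: "CP q e (shuf a b) = shuf (CP q e a) (CP q e b)"
  using CP_shuf_pt by blast

lemma CP_local_e:
  "(\<And>i v. i \<in> {1..q} \<Longrightarrow> length v < length w \<Longrightarrow> e i v = e' i v) \<Longrightarrow> CP q e a w = CP q e' a w"
proof (induction "length w" arbitrary: w a rule: less_induct)
  case less
  show ?case
  proof (cases w)
    case Nil then show ?thesis by simp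
  next
    case (Cons k w')
    show ?thesis
    proof (cases "k = 0")
      case True
      have "(\<Sum>i\<le>q. shuf (ext e i) (CP q e (dv i a)) w') = (\<Sum>i\<le>q. shuf (ext e' i) (CP q e' (dv i a)) w')"
      proof (rule sum.cong[OF refl], rule shuf_local)
        fix i v assume i: "i \<in> {..q}" and v: "length (v :: nat list) \<le> length w'"
        show "ext e i v = ext e' i v"
          using less.prems[of i v] i v Cons by (cases "i = 0") auto
        show "CP q e (dv i a) v = CP q e' (dv i a) v"
          by (rule less.hyps) (use v Cons less.prems in auto)
      qed
      then show ?thesis using True Cons by (simp add: CP_0)
    next
      case False then show ?thesis by (simp add: CP_nz Cons)
    qed
  qed
qed

lemma MX_CP_pt: "MX m b (CP q e a) w = CP q (\<lambda>j. MX m b (e j)) a w"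
proof (induction "length w" arbitrary: w a rule: less_induct)
  case less
  let ?e = "\<lambda>j. MX m b (e j)"
  show ?case
  proof (cases w)
    case Nil then show ?thesis by simp
  next
    case (Cons k w')
    show ?thesis
    proof (cases "k = 0")
      case True
      have ee: "MX m b (ext e i) = ext ?e i" for i by (cases "i = 0") auto
      have "MX m b (CP q e a) w = (\<Sum>i\<le>q. shuf (ext ?e i) (MX m b (CP q e (dv i a))) w')"
        using True Cons by (simp add: MX_Cons dv_CP_0 MX_sum MX_shuf ee)
      also have "\<dots> = (\<Sum>i\<le>q. shuf (ext ?e i) (CP q ?e (dv i a)) w')"
        by (rule sum.cong[OF refl], rule shuf_local2) (use less Cons in auto)
      also have "\<dots> = CP q ?e a w" using True Cons by (simp add: CP_0)
      finally show ?thesis .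
    next
      case False
      then show ?thesis
        by (cases "k \<le> m") (simp_all add: Cons CP_nz MX_out MX_Cons dv_CP_nz)
    qed
  qed
qed

lemma MX_CP: "MX m b (CP q e a) = CP q (\<lambda>j. MX m b (e j)) a"
  using MX_CP_pt by blast



lemma fix_unique:
  fixes T :: "('i \<Rightarrow> ser) \<Rightarrow> ('i \<Rightarrow> ser)"
  assumes loc: "\<And>h h' w j. (\<And>j v. length v < length w \<Longrightarrow> h j v = h' j v) \<Longrightarrow> T h j w = T h' j w"
    and h: "h = T h" and h': "h' = T h'"
  shows "h = h'"
proof -
  have "\<forall>j. h j w = h' j w" for w
  proof (induction "length w" arbitrary: w rule: less_induct)
    case less
    show ?case
    proof
      fix j
      have "T h j w = T h' j w" by (rule loc) (use less in auto)
      moreover have "h j w = T h j w" using h by (rule arg_cong[where f="\<lambda>f. f j w"])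
      moreover have "h' j w = T h' j w" using h' by (rule arg_cong[where f="\<lambda>f. f j w"])
      ultimately show "h j w = h' j w" by simp
    qed
  qed
  then show ?thesis by auto
qed

lemma fix_exists:
  fixes T :: "('i \<Rightarrow> ser) \<Rightarrow> ('i \<Rightarrow> ser)"
  assumes loc: "\<And>h h' w j. (\<And>j v. length v < length w \<Longrightarrow> h j v = h' j v) \<Longrightarrow> T h j w = T h' j w"
  shows "\<exists>h. h = T h"
proof -
  define it where "it k = (T ^^ k) (\<lambda>_ _. 0)" for k
  have stab: "length w < k \<Longrightarrow> it k j w = it (Suc k) j w" for k j w
  proof (induction k arbitrary: j w)
    case 0 then show ?case by simp
  next
    case (Suc k)
    have "T (it k) j w = T (it (Suc k)) j w"
      by (rule loc) (use Suc in auto)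
    then show ?case by (simp add: it_def)
  qed
  have stab2: "length w < k \<Longrightarrow> k \<le> k' \<Longrightarrow> it k j w = it k' j w" for k k' j w
  proof (induction k' arbitrary: j)
    case 0 then show ?case by simp
  next
    case (Suc k')
    show ?case
    proof (cases "k = Suc k'")
      case False
      then have "k \<le> k'" using Suc.prems by simp
      then have "it k j w = it k' j w" using Suc.IH Suc.prems(1) by simp
      also have "\<dots> = it (Suc k') j w" by (rule stab) (use Suc.prems \<open>k \<le> k'\<close> in simp)
      finally show ?thesis .
    qed simp
  qed
  define H where "H = (\<lambda>j w. it (Suc (length w)) j w)"
  have "T H j w = H j w" for j w
  proof -
    have "T H j w = T (it (Suc (length w))) j w"
    proof (rule loc)
      fix j v assume "length (v :: nat list) < length w"
      then show "H j v = it (Suc (length w)) j v"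
        unfolding H_def by (intro stab2) auto
    qed
    also have "\<dots> = it (Suc (Suc (length w))) j w" by (simp add: it_def)
    also have "\<dots> = H j w" unfolding H_def by (rule stab[symmetric]) simp
    finally show ?thesis .
  qed
  then have "H = T H" by (intro ext) simp
  then show ?thesis by (intro exI[of _ H])
qed

lemma fix_ex1:
  fixes T :: "('i \<Rightarrow> ser) \<Rightarrow> ('i \<Rightarrow> ser)"
  assumes loc: "\<And>h h' w j. (\<And>j v. length v < length w \<Longrightarrow> h j v = h' j v) \<Longrightarrow> T h j w = T h' j w"
  shows "\<exists>!h. h = T h"
proof -
  from fix_exists[OF loc] obtain H where H: "H = T H" ..
  show ?thesis
  proof (rule ex1I[of _ H])
    show "H = T H" by (rule H)
    show "h = H" if "h = T h" for h by (rule fix_unique[OF loc that H])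
  qed
qed



lemma shinv_ok:
  assumes a0: "a [] \<noteq> 0"
  shows "shuf a (shinv a) = ser1"
proof -
  define ap where "ap = (\<lambda>w. if w = [] then 0 else a w)"
  define T where "T = (\<lambda>(H :: unit \<Rightarrow> ser) (j :: unit) w. (ser1 w - shuf ap (H ()) w) / a [])"
  have loc: "T h j w = T h' j w" if "\<And>j v. length v < length w \<Longrightarrow> h j v = h' j v" for h h' w j
  proof -
    have "shuf ap (h ()) w = shuf ap (h' ()) w"
      by (rule shuf_local_strict) (use that in \<open>auto simp: ap_def\<close>)
    then show ?thesis by (simp add: T_def)
  qed
  have "\<exists>H. H = T H" by (rule fix_exists[of T]) (rule loc, blast)
  then obtain H where H: "H = T H" ..
  define b where "b = H ()"
  have bdef: "b w = (ser1 w - shuf ap b w) / a []" for w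
  proof -
    have "H () w = T H () w" using H by (rule arg_cong[where f="\<lambda>f. f () w"])
    then show ?thesis by (simp add: T_def b_def)
  qed
  have asplit: "a = (\<lambda>w. a [] * ser1 w + ap w)"
    by (rule ext) (simp add: ap_def ser1_def)
  have "shuf a b = (\<lambda>w. shuf (\<lambda>w. a [] * ser1 w) b w + shuf ap b w)"
    by (subst asplit) (rule shuf_add_left)
  also have "\<dots> = (\<lambda>w. a [] * b w + shuf ap b w)"
    by (simp add: shuf_scale_left)
  also have "\<dots> = ser1"
  proof
    fix w
    have "a [] * b w = ser1 w - shuf ap b w" using bdef[of w] a0 by (simp add: field_simps)
    then show "a [] * b w + shuf ap b w = ser1 w" by simp
  qed
  finally have ex: "shuf a b = ser1" .
  have "\<exists>!b. shuf a b = ser1"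
    using ex shuf_inv_unique by blast
  then show ?thesis unfolding shinv_def by (rule theI')
qed

lemma cinv_fix: "cinv m g = mixcomp m (vshinv g) (cinv m g)"
proof -
  have loc: "mixcomp m (vshinv g) h j w = mixcomp m (vshinv g) h' j w"
    if "\<And>j v. length v < length w \<Longrightarrow> h j v = h' j v" for h h' w j
    unfolding mixcomp_MX by (rule MX_local_h) (use that in auto)
  show ?thesis unfolding cinv_def by (rule theI'[OF fix_ex1[OF loc]])
qed

lemma P1:
  assumes pd: "pimp m d" and i: "i \<in> {1..m}"
  shows "cinv m (comp q (vshinv d) c) i = CP q (fbp m q c d) (d i)"
proof -
  define g where "g = comp q (vshinv d) c"
  define h where "h = cinv m g"
  define y where "y = fbp m q c d"
  have y: "y = (\<lambda>j. MX m h (c j))" by (simp add: y_def h_def g_def fbp_def mixcomp_MX)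
  have hfix: "h i = MX m h (shinv (g i))"
  proof -
    have "h = mixcomp m (vshinv g) h" unfolding h_def by (rule cinv_fix)
    then have "h i = mixcomp m (vshinv g) h i" by (rule arg_cong[where f="\<lambda>f. f i"])
    then show ?thesis by (simp add: mixcomp_MX vshinv_def)
  qed
  have d0: "d i [] \<noteq> 0" using pd i by (simp add: pimp_def)
  have dinv: "shuf (d i) (shinv (d i)) = ser1" by (rule shinv_ok[of "d i", OF d0])
  have gi: "g i = CP q c (shinv (d i))" by (simp add: g_def comp_CP vshinv_def)
  have "d i [] * shinv (d i) [] = 1"
    using arg_cong[OF dinv, of "\<lambda>f. f []"] by simp
  then have g0: "g i [] \<noteq> 0" by (simp add: gi) (metis mult_zero_right zero_neq_one)
  have ginv: "shuf (g i) (shinv (g i)) = ser1" by (rule shinv_ok[of "g i", OF g0])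
  have 1: "shuf (CP q y (shinv (d i))) (h i) = ser1"
  proof -
    have "ser1 = MX m h (shuf (g i) (shinv (g i)))" by (simp add: ginv)
    also have "\<dots> = shuf (CP q y (shinv (d i))) (h i)"
      by (simp add: MX_shuf hfix[unfolded gi, symmetric] gi MX_CP y)
    finally show ?thesis by simp
  qed
  have 2: "shuf (CP q y (shinv (d i))) (CP q y (d i)) = ser1"
    by (simp add: CP_shuf[symmetric] shuf_comm[of "shinv (d i)"] dinv)
  have "h i = CP q y (d i)" by (rule shuf_inv_unique[OF 1 2])
  then show ?thesis by (simp add: h_def g_def y_def)
qed

lemma fbp_fix:
  assumes pd: "pimp m d"
  shows "fbp m q c d j = MX m (\<lambda>i. CP q (fbp m q c d) (d i)) (c j)"
proof
  fix w
  show "fbp m q c d j w = MX m (\<lambda>i. CP q (fbp m q c d) (d i)) (c j) w"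
    unfolding fbp_def[of m q c d] mixcomp_MX
    by (rule MX_local_h) (simp add: P1[OF pd, of _ q c, unfolded fbp_def mixcomp_MX])
qed

lemma P2:
  assumes y: "\<And>j. j \<in> {1..q} \<Longrightarrow> y j = MX m (\<lambda>i. CP q y (d i)) (c j)"
    and y': "\<And>j. j \<in> {1..q} \<Longrightarrow> y' j = MX m (\<lambda>i. CP q y' (d i)) (c j)"
  shows "\<forall>j\<in>{1..q}. y j w = y' j w"
proof (induction "length w" arbitrary: w rule: less_induct)
  case less
  show ?case
  proof
    fix j assume j: "j \<in> {1..q}"
    have "y j w = MX m (\<lambda>i. CP q y (d i)) (c j) w" using y[OF j] by simp
    also have "\<dots> = MX m (\<lambda>i. CP q y' (d i)) (c j) w"
    proof (rule MX_local_h)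
      fix i v assume "length (v :: nat list) < length w"
      then show "CP q y (d i) v = CP q y' (d i) v"
        by (intro CP_local_e) (use less in auto)
    qed
    also have "\<dots> = y' j w" using y'[OF j] by simp
    finally show "y j w = y' j w" .
  qed
qed

theorem theorem16:
  fixes m q :: nat and c d1 d2 :: vser
  assumes "pimp m d1" and "pimp m d2"
  shows "ser_eq q m (fbp m q c vone) c
    \<and> ser_eq q m (fbp m q (fbp m q c d1) d2) (fbp m q c (vshuf d1 d2))"
proof
  have p1: "pimp m vone" by (simp add: pimp_def vone_def)
  show "ser_eq q m (fbp m q c vone) c"
    unfolding ser_eq_def
  proof (intro ballI allI impI)
    fix j w assume w: "set w \<subseteq> {..m}"
    have "fbp m q c vone j w = MX m (\<lambda>i. CP q (fbp m q c vone) (vone i)) (c j) w"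
      using fbp_fix[OF p1, of q c j] by simp
    also have "\<dots> = MX m (\<lambda>_. ser1) (c j) w"
      by (rule MX_local_h) (simp add: vone_def)
    also have "\<dots> = c j w" by (rule MX_id[OF w])
    finally show "fbp m q c vone j w = c j w" .
  qed
next
  define y1 where "y1 = fbp m q c d1"
  define y2 where "y2 = fbp m q y1 d2"
  define h1 where "h1 = cinv m (comp q (vshinv d1) c)"
  define h2 where "h2 = cinv m (comp q (vshinv d2) y1)"
  have pd: "pimp m (vshuf d1 d2)"
    using assms by (simp add: pimp_def vshuf_def)
  have y1e: "y1 = (\<lambda>j. MX m h1 (c j))" by (simp add: y1_def h1_def fbp_def mixcomp_MX)
  have y2e: "y2 = (\<lambda>j. MX m h2 (y1 j))" by (simp add: y2_def h2_def fbp_def mixcomp_MX)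
  have h1i: "h1 i = CP q y1 (d1 i)" if "i \<in> {1..m}" for i
    unfolding h1_def y1_def by (rule P1[OF assms(1) that])
  have h2i: "h2 i = CP q y2 (d2 i)" if "i \<in> {1..m}" for i
    unfolding h2_def y2_def by (rule P1[OF assms(2) that])
  have fix2: "y2 j = MX m (\<lambda>i. CP q y2 (vshuf d1 d2 i)) (c j)" for j
  proof
    fix w
    have "y2 j w = MX m (\<lambda>i. shuf (MX m h2 (h1 i)) (h2 i)) (c j) w"
      by (simp add: y2e y1e MX_comp)
    also have "\<dots> = MX m (\<lambda>i. CP q y2 (vshuf d1 d2 i)) (c j) w"
    proof (rule MX_local_h)
      fix i v assume i: "i \<in> {1..m}"
      have "MX m h2 (h1 i) = CP q y2 (d1 i)"
        by (simp add: h1i[OF i] MX_CP y2e)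
      then show "shuf (MX m h2 (h1 i)) (h2 i) v = CP q y2 (vshuf d1 d2 i) v"
        by (simp add: h2i[OF i] vshuf_def CP_shuf)
    qed
    finally show "y2 j w = MX m (\<lambda>i. CP q y2 (vshuf d1 d2 i)) (c j) w" .
  qed
  have "\<forall>j\<in>{1..q}. y2 j w = fbp m q c (vshuf d1 d2) j w" for w
    by (rule P2[where y=y2 and y'="fbp m q c (vshuf d1 d2)" and d="vshuf d1 d2" and c=c and m=m and q=q])
       (use fix2 fbp_fix[OF pd] in auto)
  then show "ser_eq q m (fbp m q (fbp m q c d1) d2) (fbp m q c (vshuf d1 d2))"
    unfolding ser_eq_def y2_def y1_def by blast
qed


end
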